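(* Let $S=\mathbb{Z}^2\setminus 2\mathbb{Z}^2$ (the decorated lattice) with its set $L$ of nearest-neighbour edges (pairs $\{i,j\}\subset S$ with $\|i-j\|_2=1$). Consider the $XY$ model on $S$ with spins $\sigma_i\in\mathbb{S}^1$ (angles $\theta_i$) and formal Hamiltonian $$H(\sigma)=-\sum_{\{i,j\}\in L}J\langle\sigma_i,\sigma_j\rangle-\sum_{i\in S}h_i\langle\sigma_i,e_2\rangle=-\sum_{\{i,j\}\in L}J\cos(\theta_i-\theta_j)-\sum_{i\in S}h_i\sin\theta_i,$$ with $J>0$, where the field is $h_i=\sum_{j\in 2\mathbb{Z}^2,\ \|i-j\|_2=1} s_{j/2}$ and, for $(a,b)\in\mathbb{Z}^2$, $s_{(a,b)}=(-1)^{\lfloor a/2\rfloor+\lfloor b/2\rfloor}$ (so $h_i\in\{2,0,-2\}$: $+2$ between two North-prescribed even sites, $-2$ between two South-prescribed ones, $0$ otherwise). Then this model displays a spin-flop transition at zero temperature in the East–West direction: there exist two distinct ground states $\theta^{ME}$ and $\theta^{MW}$ whose horizontal spin components are opposite and nonzero, $\sigma^{(1)}(\theta^{ME})=-\sigma^{(1)}(\theta^{MW})\neq 0$.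
   Context: $e_1,e_2$ is the canonical basis of $\mathbb{R}^2$; $\sigma^{(1)}=\langle\sigma,e_1\rangle=\cos\theta$ is the horizontal (East–West) component of a spin. The field $h$ comes from freezing the spins at sites $2k$, $k\in\mathbb{Z}^2$, to North ($s_k=+1$) or South ($s_k=-1$) according to the doubly alternating pattern. A ground state is a configuration on $S$ of minimal energy (no finite modification lowers the energy). $\theta^{ME}$ ("mostly East") is periodic, taking values NE, E, SE; $\theta^{MW}$ ("mostly West") is its mirror image NW, W, SW under $\theta\mapsto\pi-\theta$. *)

theory Defs
  imports Complex_Main
begin

type_synonym site = "int \<times> int"

definition dlat :: "site set" where
  "dlat = UNIV - {p. even (fst p) \<and> even (snd p)}"

definition nn :: "site \<Rightarrow> site \<Rightarrow> bool" where
  "nn i j \<longleftrightarrow> (fst i - fst j)^2 + (snd i - snd j)^2 = 1"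

definition s_pat :: "site \<Rightarrow> real" where
  "s_pat p = (-1::real) powi (\<lfloor>real_of_int (fst p) / 2\<rfloor> + \<lfloor>real_of_int (snd p) / 2\<rfloor>)"

definition field :: "site \<Rightarrow> real" where
  "field i = (\<Sum>j\<in>{j. even (fst j) \<and> even (snd j) \<and> nn i j}.
                 s_pat (fst j div 2, snd j div 2))"

text \<open>Unordered edges are summed as ordered pairs
  with a factor 1/2 (cos is even).\<close>
definition H_loc :: "real \<Rightarrow> site set \<Rightarrow> (site \<Rightarrow> real) \<Rightarrow> real" where
  "H_loc J Lam \<theta> =
     - (1/2) * (\<Sum>(i,j)\<in>{(i,j). i \<in> dlat \<and> j \<in> dlat \<and> nn i j \<and> (i \<in> Lam \<or> j \<in> Lam)}.
                   J * cos (\<theta> i - \<theta> j))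
     - (\<Sum>i\<in>Lam. field i * sin (\<theta> i))"

definition ground_state :: "real \<Rightarrow> (site \<Rightarrow> real) \<Rightarrow> bool" where
  "ground_state J \<theta> \<longleftrightarrow>
     (\<forall>Lam \<theta>'. finite Lam \<longrightarrow> Lam \<subseteq> dlat \<longrightarrow> (\<forall>i\<in>dlat - Lam. \<theta>' i = \<theta> i) \<longrightarrow>
        H_loc J Lam \<theta> \<le> H_loc J Lam \<theta>')"

end

theory Submission
  imports Defs "HOL-Library.Groups_Big_Fun"
begin


definition sh :: "site \<Rightarrow> int \<Rightarrow> int \<Rightarrow> site" where
  "sh x c d = (fst x + c, snd x + d)"

definition sg :: "site \<Rightarrow> real" where
  "sg x = (if even (fst x div 4 + snd x div 4) then 1 else -1)"

definition nzf :: "site \<Rightarrow> bool" where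
  "nzf x \<longleftrightarrow> (even (fst x) \<and> snd x mod 4 = 1) \<or> (fst x mod 4 = 1 \<and> even (snd x))"

lemma sq_int_one: "(x::int)^2 + y^2 = 1 \<longleftrightarrow> (x = 1 \<and> y = 0) \<or> (x = -1 \<and> y = 0) \<or> (x = 0 \<and> y = 1) \<or> (x = 0 \<and> y = -1)"
proof
  assume h: "x^2 + y^2 = 1"
  have ax: "\<bar>x\<bar> \<le> 1"
  proof (rule ccontr)
    assume "\<not> \<bar>x\<bar> \<le> 1"
    then have "\<bar>x\<bar> * \<bar>x\<bar> \<ge> 2 * 2" by (intro mult_mono) auto
    then have "x^2 \<ge> 4" by (simp add: power2_eq_square abs_mult[symmetric])
    moreover have "y^2 \<ge> 0" by simp
    ultimately show False using h by linarith
  qed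
  have ay: "\<bar>y\<bar> \<le> 1"
  proof (rule ccontr)
    assume "\<not> \<bar>y\<bar> \<le> 1"
    then have "\<bar>y\<bar> * \<bar>y\<bar> \<ge> 2 * 2" by (intro mult_mono) auto
    then have "y^2 \<ge> 4" by (simp add: power2_eq_square abs_mult[symmetric])
    moreover have "x^2 \<ge> 0" by simp
    ultimately show False using h by linarith
  qed
  from ax have "x \<in> {-1,0,1}" by auto
  moreover from ay have "y \<in> {-1,0,1}" by auto
  ultimately show "(x = 1 \<and> y = 0) \<or> (x = -1 \<and> y = 0) \<or> (x = 0 \<and> y = 1) \<or> (x = 0 \<and> y = -1)"
    using h by auto
qed auto

lemma nn_iff: "nn i j \<longleftrightarrow> j = sh i 1 0 \<or> j = sh i (-1) 0 \<or> j = sh i 0 1 \<or> j = sh i 0 (-1)"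
  unfolding nn_def sq_int_one sh_def
  by (cases i; cases j) auto

lemma nn_sym: "nn i j \<longleftrightarrow> nn j i"
  unfolding nn_def by (simp add: power2_commute)

lemma s_pat_eq: "s_pat (p, q) = (if even (p div 2 + q div 2) then 1 else -1)"
proof -
  have "\<lfloor>real_of_int p / 2\<rfloor> = p div 2" "\<lfloor>real_of_int q / 2\<rfloor> = q div 2"
    using floor_divide_of_int_eq[of p 2] floor_divide_of_int_eq[of q 2] by simp_all
  then show ?thesis unfolding s_pat_def by (simp add: power_int_minus_left)
qed

lemma div22: "(a::int) div 2 div 2 = a div 4" by (simp add: zdiv_zmult2_eq)

lemma even_mod4: "even (a::int) \<Longrightarrow> a mod 4 \<noteq> 1" by presburger

lemma field_eq: "field x = (if nzf x then 2 * sg x else 0)"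
proof -
  obtain a b where x: "x = (a,b)" by (cases x)
  have S: "{j. even (fst j) \<and> even (snd j) \<and> nn x j} =
     {j \<in> {(a+1,b),(a-1,b),(a,b+1),(a,b-1)}. even (fst j) \<and> even (snd j)}"
    unfolding nn_iff sh_def x by auto
  consider "even a" "even b" | "even a" "odd b" | "odd a" "even b" | "odd a" "odd b" by blast
  then show ?thesis
  proof cases
    case 1
    then have E: "{j. even (fst j) \<and> even (snd j) \<and> nn x j} = {}" unfolding S by auto
    have "\<not> nzf x" using 1 even_mod4[of a] even_mod4[of b] unfolding nzf_def x by simp
    then show ?thesis unfolding field_def E by simp
  next
    case 2
    then have "{j. even (fst j) \<and> even (snd j) \<and> nn x j} = {(a,b+1),(a,b-1)}" unfolding S by auto
    then have f: "field x = s_pat (a div 2, (b+1) div 2) + s_pat (a div 2, (b-1) div 2)"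
      by (simp add: field_def)
    have n: "nzf x \<longleftrightarrow> b mod 4 = 1" using 2 by (simp add: nzf_def x)
    show ?thesis
    proof (cases "b mod 4 = 1")
      case True
      then have "(b+1) div 2 div 2 = b div 4" "(b-1) div 2 div 2 = b div 4" unfolding div22 by presburger+
      then show ?thesis using True n f unfolding s_pat_eq sg_def x div22 by simp
    next
      case False
      then have "(b+1) div 2 div 2 = (b-1) div 2 div 2 + 1" using 2 unfolding div22 by presburger
      then show ?thesis using False n f unfolding s_pat_eq sg_def x div22 by simp
    qed
  next
    case 3
    then have "{j. even (fst j) \<and> even (snd j) \<and> nn x j} = {(a+1,b),(a-1,b)}" unfolding S by auto
    then have f: "field x = s_pat ((a+1) div 2, b div 2) + s_pat ((a-1) div 2, b div 2)"
      by (simp add: field_def)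
    have n: "nzf x \<longleftrightarrow> a mod 4 = 1" using 3 by (simp add: nzf_def x)
    show ?thesis
    proof (cases "a mod 4 = 1")
      case True
      then have "(a+1) div 2 div 2 = a div 4" "(a-1) div 2 div 2 = a div 4" unfolding div22 by presburger+
      then show ?thesis using True n f unfolding s_pat_eq sg_def x div22 by simp
    next
      case False
      then have "(a+1) div 2 div 2 = (a-1) div 2 div 2 + 1" using 3 unfolding div22 by presburger
      then show ?thesis using False n f unfolding s_pat_eq sg_def x div22 by simp
    qed
  next
    case 4
    then have E: "{j. even (fst j) \<and> even (snd j) \<and> nn x j} = {}" unfolding S by auto
    have "\<not> nzf x" using 4 unfolding nzf_def x by simp
    then show ?thesis unfolding field_def E by simp
  qed
qed



lemma arm_ineq:
  fixes J c m u :: real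
  assumes J: "J > 0"
  defines "R \<equiv> sqrt (J^2 + 4)"
  shows "- J * cos (c - m) - J * cos (u - m) - 2 * sin m + (2 * J / R) * sin u \<ge> - J - R"
proof -
  have R0: "R > 0" unfolding R_def by (simp add: add_nonneg_pos)
  have R2: "R^2 = J^2 + 4" unfolding R_def by simp
  define V1 where "V1 = J * cos u"
  define V2 where "V2 = J * sin u + 2"
  have e: "(cos m * V1 + sin m * V2)^2 + (cos m * V2 - sin m * V1)^2 = (cos m^2 + sin m^2) * (V1^2+V2^2)"
    by algebra
  have "(cos m * V1 + sin m * V2)^2 \<le> V1^2+V2^2"
  proof -
    have h0: "(cos m * V2 - sin m * V1)^2 \<ge> 0" by simp
    have e2: "(cos m * V1 + sin m * V2)^2 + (cos m * V2 - sin m * V1)^2 = V1^2+V2^2" using e by simp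
    show ?thesis using h0 e2 by linarith
  qed
  then have s1: "cos m * V1 + sin m * V2 \<le> sqrt (V1^2+V2^2)"
    by (rule real_le_rsqrt)
  have "V1^2+V2^2 = J^2 * (cos u^2 + sin u^2) + 4 * J * sin u + 4"
    unfolding V1_def V2_def by algebra
  then have vv: "V1^2+V2^2 = R^2 + 4 * J * sin u" using R2 by simp
  have nn: "R + 2 * J * sin u / R \<ge> 0"
  proof -
    have "\<bar>sin u\<bar> \<le> 1" by simp
    then have "2 * J * \<bar>sin u\<bar> \<le> 2 * J" using J by simp
    moreover have "2 * J \<le> R^2"
    proof -
      have "(J-1)^2 = J^2 - 2*J + 1" by algebra
      moreover have "(J-1)^2 \<ge> 0" by simp
      ultimately show ?thesis using R2 by linarith
    qed
    moreover have "- (2 * J * sin u) \<le> 2 * J"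
    proof -
      have "J * (- sin u) \<le> J * 1" using J by (intro mult_left_mono) auto
      then show ?thesis by simp
    qed
    ultimately have "- (2 * J * sin u) \<le> R * R" by (simp add: power2_eq_square)
    then have "- (2 * J * sin u) / R \<le> R" using R0 by (simp only: divide_le_eq) simp
    then show ?thesis by simp
  qed
  have sq: "(R + 2 * J * sin u / R)^2 = R^2 + 4 * J * sin u + (2 * J * sin u / R)^2"
    using R0 by (simp add: power2_eq_square field_simps)
  have "sqrt (V1^2+V2^2) \<le> R + 2 * J * sin u / R"
  proof -
    have "V1^2+V2^2 \<le> (R + 2 * J * sin u / R)^2" using sq vv by simp
    then have "sqrt (V1^2+V2^2) \<le> sqrt ((R + 2 * J * sin u / R)^2)" by (rule real_sqrt_le_mono)
    then show ?thesis using nn by simp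
  qed
  with s1 have key: "cos m * V1 + sin m * V2 \<le> R + 2 * J * sin u / R" by linarith
  have "J * cos (u - m) + 2 * sin m = cos m * V1 + sin m * V2"
    unfolding V1_def V2_def cos_diff by (simp add: algebra_simps)
  moreover have "J * cos (c - m) \<le> J * 1" using J by (intro mult_left_mono) auto
  moreover have "(2 * J / R) * sin u = 2 * J * sin u / R" by simp
  ultimately show ?thesis using key by linarith
qed



definition full :: "site \<Rightarrow> bool" where
  "full x \<longleftrightarrow> fst x mod 4 = 1 \<and> snd x mod 4 = 1"

definition ctr :: "site \<Rightarrow> bool" where
  "ctr x \<longleftrightarrow> odd (fst x) \<and> odd (snd x)"

definition tau :: "site \<Rightarrow> real" where
  "tau x = (if full x \<or> nzf x then sg x else 0)"

definition bd :: "real \<Rightarrow> (site \<Rightarrow> real) \<Rightarrow> site \<Rightarrow> site \<Rightarrow> real" where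
  "bd J \<theta> u v = - J * cos (\<theta> u - \<theta> v)"

definition fd :: "(site \<Rightarrow> real) \<Rightarrow> site \<Rightarrow> real" where
  "fd \<theta> m = - field m * sin (\<theta> m)"

definition star :: "real \<Rightarrow> (site \<Rightarrow> real) \<Rightarrow> site \<Rightarrow> real" where
  "star J \<theta> x = bd J \<theta> x (sh x 1 0) + bd J \<theta> x (sh x (-1) 0) + bd J \<theta> x (sh x 0 1) + bd J \<theta> x (sh x 0 (-1))"

definition armt :: "real \<Rightarrow> (site \<Rightarrow> real) \<Rightarrow> site \<Rightarrow> int \<Rightarrow> int \<Rightarrow> real" where
  "armt J \<theta> x c d = (if full (sh x (2*c) (2*d)) then bd J \<theta> (sh x (2*c) (2*d)) (sh x c d) + fd \<theta> (sh x c d) else 0)"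

definition pc :: "real \<Rightarrow> (site \<Rightarrow> real) \<Rightarrow> site \<Rightarrow> real" where
  "pc J \<theta> x = (if ctr x \<and> \<not> full x then star J \<theta> x else 0)
     + armt J \<theta> x 1 0 + armt J \<theta> x (-1) 0 + armt J \<theta> x 0 1 + armt J \<theta> x 0 (-1)"

lemma sg_cases: "sg x = 1 \<or> sg x = -1" unfolding sg_def by auto

lemma mixed_ineq:
  fixes J u z1 z2 m1 c1 m2 c2 e :: real
  assumes J: "J > 0" and e: "e = 1 \<or> e = -1"
  shows "- J * cos (u - z1) - J * cos (u - z2) - J * cos (u - m1) - J * cos (u - m2)
         + (- J * cos (c1 - m1) - 2 * e * sin m1) + (- J * cos (c2 - m2) + 2 * e * sin m2)
         \<ge> - 4 * J - 2 * sqrt (J^2 + 4)"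
proof -
  have z: "J * cos (u - z1) \<le> J" "J * cos (u - z2) \<le> J"
    using J by (simp_all add: mult_left_le)
  have A1: "- J * cos (c1 - m1) - J * cos (u - m1) - 2 * sin m1 + (2 * J / sqrt (J^2 + 4)) * sin u \<ge> - J - sqrt (J^2 + 4)"
    using arm_ineq[OF J] by simp
  have A2: "- J * cos (c2 - m2) - J * cos (u - m2) - 2 * sin m2 + (2 * J / sqrt (J^2 + 4)) * sin u \<ge> - J - sqrt (J^2 + 4)"
    using arm_ineq[OF J] by simp
  have B1: "- J * cos (c1 - m1) - J * cos (u - m1) + 2 * sin m1 - (2 * J / sqrt (J^2 + 4)) * sin u \<ge> - J - sqrt (J^2 + 4)"
    using arm_ineq[OF J, of "-c1" "-m1" "-u"] by (simp add: cos_diff algebra_simps)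
  have B2: "- J * cos (c2 - m2) - J * cos (u - m2) + 2 * sin m2 - (2 * J / sqrt (J^2 + 4)) * sin u \<ge> - J - sqrt (J^2 + 4)"
    using arm_ineq[OF J, of "-c2" "-m2" "-u"] by (simp add: cos_diff algebra_simps)
  from e show ?thesis
  proof
    assume "e = 1" then show ?thesis using z A1 B2 by simp
  next
    assume "e = -1" then show ?thesis using z A2 B1 by simp
  qed
qed

lemma mixed_val:
  fixes J b e :: real
  assumes J: "J > 0" and e: "e = 1 \<or> e = -1"
    and cb: "cos b = J / sqrt (J^2 + 4)" and sb: "sin b = 2 / sqrt (J^2 + 4)"
  shows "- J * cos (0 - 0) - J * cos (0 - 0) - J * cos (0 - e * b) - J * cos (0 - (- e) * b)
         + (- J * cos (e * b - e * b) - 2 * e * sin (e * b)) + (- J * cos ((-e) * b - (-e) * b) + 2 * e * sin ((-e) * b))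
         = - 4 * J - 2 * sqrt (J^2 + 4)"
proof -
  define R where "R = sqrt (J^2 + 4)"
  have R0: "R > 0" unfolding R_def by (simp add: add_nonneg_pos)
  have R2: "R^2 = J^2 + 4" unfolding R_def by simp
  have "e * sin (e * b) = sin b" "cos (e * b) = cos b" using e by auto
  then have "- J * cos (0 - 0) - J * cos (0 - 0) - J * cos (0 - e * b) - J * cos (0 - (- e) * b)
         + (- J * cos (e * b - e * b) - 2 * e * sin (e * b)) + (- J * cos ((-e) * b - (-e) * b) + 2 * e * sin ((-e) * b))
       = - 4 * J - 2 * (J * cos b + 2 * sin b)" by simp
  also have "J * cos b + 2 * sin b = R"
  proof -
    have c1: "R * cos b = J" "R * sin b = 2" using cb sb R0 unfolding R_def[symmetric] by simp_all
    have "R * (J * cos b + 2 * sin b) = J * (R * cos b) + 2 * (R * sin b)" by algebra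
    also have "\<dots> = R * R" using c1 R2 by (simp add: power2_eq_square)
    finally show ?thesis using R0 by simp
  qed
  finally show ?thesis unfolding R_def .
qed

lemma mixed_val2:
  fixes J b e u z1 z2 m1 c1 m2 c2 :: real
  assumes J: "J > 0" and e: "e = 1 \<or> e = -1"
    and cb: "cos b = J / sqrt (J^2 + 4)" and sb: "sin b = 2 / sqrt (J^2 + 4)"
    and v: "u = b * 0" "z1 = b * 0" "z2 = b * 0" "m1 = b * e" "c1 = b * e" "m2 = b * (- e)" "c2 = b * (- e)"
  shows "- J * cos (u - z1) - J * cos (u - z2) - J * cos (u - m1) - J * cos (u - m2)
         + (- J * cos (c1 - m1) - 2 * e * sin m1) + (- J * cos (c2 - m2) + 2 * e * sin m2)
         = - 4 * J - 2 * sqrt (J^2 + 4)"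
  using mixed_val[OF J e cb sb] unfolding v by (simp add: mult.commute)

lemma sh_pair [simp]: "sh (a,b) c d = (a+c, b+d)" by (simp add: sh_def)

lemma full_sh_ctr: "full (sh x (2*c) (2*d)) \<Longrightarrow> ctr x"
  unfolding full_def ctr_def sh_def by simp presburger

lemma Jcos_le: "J > 0 \<Longrightarrow> J * cos t \<le> (J::real)"
  by (rule mult_left_le) auto

lemma star_lb: assumes J: "J > 0" shows "star J \<theta> x \<ge> - 4 * J"
  unfolding star_def bd_def
  using Jcos_le[OF J, of "\<theta> x - \<theta> (sh x 1 0)"] Jcos_le[OF J, of "\<theta> x - \<theta> (sh x (-1) 0)"]
    Jcos_le[OF J, of "\<theta> x - \<theta> (sh x 0 1)"] Jcos_le[OF J, of "\<theta> x - \<theta> (sh x 0 (-1))"]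
  by linarith

lemma pc_ge:
  fixes J \<beta> :: real and \<theta> :: "site \<Rightarrow> real"
  assumes J: "J > 0" and cb: "cos \<beta> = J / sqrt (J^2 + 4)" and sb: "sin \<beta> = 2 / sqrt (J^2 + 4)"
  shows "pc J \<theta> x \<ge> pc J (\<lambda>p. \<beta> * tau p) x"
proof -
  let ?t = "\<lambda>p. \<beta> * tau p"
  obtain a b where x: "x = (a,b)" by (cases x)
  show ?thesis
  proof (cases "ctr x")
    case False
    then have "\<not> full (sh x 2 0)" "\<not> full (sh x (-2) 0)" "\<not> full (sh x 0 2)" "\<not> full (sh x 0 (-2))"
      using full_sh_ctr[of x 1 0] full_sh_ctr[of x "-1" 0] full_sh_ctr[of x 0 1] full_sh_ctr[of x 0 "-1"] by auto
    then have "pc J \<theta> x = 0" "pc J ?t x = 0" using False unfolding pc_def armt_def by simp_all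
    then show ?thesis by simp
  next
    case True
    then have oa: "odd a" and ob: "odd b" unfolding ctr_def x by auto
    then have ma: "a mod 4 = 1 \<or> a mod 4 = 3" and mb: "b mod 4 = 1 \<or> b mod 4 = 3" by presburger+
    show ?thesis
    proof (cases "a mod 4 = 1")
      case a1: True
      show ?thesis
      proof (cases "b mod 4 = 1")
        case b1: True
        have "(a+2) mod 4 = 3" "(a-2) mod 4 = 3" "(b+2) mod 4 = 3" "(b-2) mod 4 = 3" using a1 b1 by presburger+
        then have A3: "armt J th x 1 0 = 0" "armt J th x (-1) 0 = 0" "armt J th x 0 1 = 0" "armt J th x 0 (-1) = 0" for th
          unfolding armt_def x by (simp_all add: full_def)
        have fx: "full x" using a1 b1 unfolding x full_def by simp
        have "pc J th x = 0" for th unfolding pc_def A3 using fx by simp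
        then have "pc J \<theta> x = 0" "pc J ?t x = 0" by simp_all
        then show ?thesis by simp
      next
        case b3: False
        then have b3: "b mod 4 = 3" using mb by simp
        have fa: "(a+2) mod 4 = 3" "(a-2) mod 4 = 3" using a1 by presburger+
        have fb: "(b+2) mod 4 = 1" "(b-2) mod 4 = 1" using b3 by presburger+
        define e where "e = sg (a, b+1)"
        have e: "e = 1 \<or> e = -1" unfolding e_def by (rule sg_cases)
        have d1: "(b+2) div 4 = (b+1) div 4" "(b-1) div 4 = (b+1) div 4 - 1" "(b-2) div 4 = (b+1) div 4 - 1"
          using b3 by presburger+
        have sgs: "sg (a, b+2) = e" "sg (a, b-1) = - e" "sg (a, b-2) = - e"
          unfolding e_def sg_def using d1 by simp_all
        have nz: "nzf (a, b+1)" "nzf (a, b-1)" using a1 ob unfolding nzf_def by simp_all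
        have fl: "field (a, b+1) = 2 * e" "field (a, b-1) = - 2 * e"
          unfolding field_eq using nz sgs e_def by simp_all
        have pcv: "pc J th x = - J * cos (th x - th (a+1,b)) - J * cos (th x - th (a-1,b))
           - J * cos (th x - th (a,b+1)) - J * cos (th x - th (a,b-1))
           + (- J * cos (th (a,b+2) - th (a,b+1)) - 2 * e * sin (th (a,b+1)))
           + (- J * cos (th (a,b-2) - th (a,b-1)) + 2 * e * sin (th (a,b-1)))" for th
        proof -
          have nf: "\<not> full x" using b3 unfolding x full_def by simp
          have A1: "armt J th x 0 1 = - J * cos (th (a,b+2) - th (a,b+1)) - 2 * e * sin (th (a,b+1))"
            unfolding armt_def bd_def fd_def x using fb(1) a1 fl(1) by (simp add: full_def)
          have A2: "armt J th x 0 (-1) = - J * cos (th (a,b-2) - th (a,b-1)) + 2 * e * sin (th (a,b-1))"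
            unfolding armt_def bd_def fd_def x using fb(2) a1 fl(2) by (simp add: full_def)
          have A3: "armt J th x 1 0 = 0" "armt J th x (-1) 0 = 0"
            unfolding armt_def x using fa by (simp_all add: full_def)
          have S: "star J th x = - J * cos (th x - th (a+1,b)) - J * cos (th x - th (a-1,b))
           - J * cos (th x - th (a,b+1)) - J * cos (th x - th (a,b-1))"
            unfolding star_def bd_def x by simp
          have "pc J th x = star J th x + armt J th x 1 0 + armt J th x (-1) 0 + armt J th x 0 1 + armt J th x 0 (-1)"
            unfolding pc_def using True nf by simp
          then show ?thesis unfolding S A1 A2 A3 by simp
        qed
        have tv: "tau (a,b) = 0" "tau (a+1,b) = 0" "tau (a-1,b) = 0" "tau (a,b+1) = e"
            "tau (a,b+2) = e" "tau (a,b-1) = - e" "tau (a,b-2) = - e"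
          using a1 b3 fb oa ob sgs even_mod4[of "a+1"] even_mod4[of "a-1"]
          unfolding tau_def full_def nzf_def e_def by simp_all
        have "pc J ?t x = - 4 * J - 2 * sqrt (J^2 + 4)"
          unfolding pcv by (rule mixed_val2[OF J e cb sb]) (simp_all add: tv x)
        moreover have "pc J \<theta> x \<ge> - 4 * J - 2 * sqrt (J^2 + 4)"
          unfolding pcv by (rule mixed_ineq[OF J e])
        ultimately show ?thesis by simp
      qed
    next
      case a3: False
      then have a3: "a mod 4 = 3" using ma by simp
      show ?thesis
      proof (cases "b mod 4 = 1")
        case b1: True
        have fb: "(b+2) mod 4 = 3" "(b-2) mod 4 = 3" using b1 by presburger+
        have fa: "(a+2) mod 4 = 1" "(a-2) mod 4 = 1" using a3 by presburger+
        define e where "e = sg (a+1, b)"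
        have e: "e = 1 \<or> e = -1" unfolding e_def by (rule sg_cases)
        have d1: "(a+2) div 4 = (a+1) div 4" "(a-1) div 4 = (a+1) div 4 - 1" "(a-2) div 4 = (a+1) div 4 - 1"
          using a3 by presburger+
        have sgs: "sg (a+2, b) = e" "sg (a-1, b) = - e" "sg (a-2, b) = - e"
          unfolding e_def sg_def using d1 by simp_all
        have nz: "nzf (a+1, b)" "nzf (a-1, b)" using b1 oa unfolding nzf_def by simp_all
        have fl: "field (a+1, b) = 2 * e" "field (a-1, b) = - 2 * e"
          unfolding field_eq using nz sgs e_def by simp_all
        have pcv: "pc J th x = - J * cos (th x - th (a,b+1)) - J * cos (th x - th (a,b-1))
           - J * cos (th x - th (a+1,b)) - J * cos (th x - th (a-1,b))
           + (- J * cos (th (a+2,b) - th (a+1,b)) - 2 * e * sin (th (a+1,b)))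
           + (- J * cos (th (a-2,b) - th (a-1,b)) + 2 * e * sin (th (a-1,b)))" for th
        proof -
          have nf: "\<not> full x" using a3 unfolding x full_def by simp
          have A1: "armt J th x 1 0 = - J * cos (th (a+2,b) - th (a+1,b)) - 2 * e * sin (th (a+1,b))"
            unfolding armt_def bd_def fd_def x using fa(1) b1 fl(1) by (simp add: full_def)
          have A2: "armt J th x (-1) 0 = - J * cos (th (a-2,b) - th (a-1,b)) + 2 * e * sin (th (a-1,b))"
            unfolding armt_def bd_def fd_def x using fa(2) b1 fl(2) by (simp add: full_def)
          have A3: "armt J th x 0 1 = 0" "armt J th x 0 (-1) = 0"
            unfolding armt_def x using fb by (simp_all add: full_def)
          have S: "star J th x = - J * cos (th x - th (a+1,b)) - J * cos (th x - th (a-1,b))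
           - J * cos (th x - th (a,b+1)) - J * cos (th x - th (a,b-1))"
            unfolding star_def bd_def x by simp
          have "pc J th x = star J th x + armt J th x 1 0 + armt J th x (-1) 0 + armt J th x 0 1 + armt J th x 0 (-1)"
            unfolding pc_def using True nf by simp
          then show ?thesis unfolding S A1 A2 A3 by simp
        qed
        have tv: "tau (a,b) = 0" "tau (a,b+1) = 0" "tau (a,b-1) = 0" "tau (a+1,b) = e"
            "tau (a+2,b) = e" "tau (a-1,b) = - e" "tau (a-2,b) = - e"
          using a3 b1 fa oa ob sgs even_mod4[of "b+1"] even_mod4[of "b-1"]
          unfolding tau_def full_def nzf_def e_def by simp_all
        have "pc J ?t x = - 4 * J - 2 * sqrt (J^2 + 4)"
          unfolding pcv by (rule mixed_val2[OF J e cb sb]) (simp_all add: tv x)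
        moreover have "pc J \<theta> x \<ge> - 4 * J - 2 * sqrt (J^2 + 4)"
          unfolding pcv by (rule mixed_ineq[OF J e])
        ultimately show ?thesis by simp
      next
        case b3: False
        then have b3: "b mod 4 = 3" using mb by simp
        have "(a+2) mod 4 = 1" "(a-2) mod 4 = 1" "(b+2) mod 4 = 1" "(b-2) mod 4 = 1" using a3 b3 by presburger+
        then have A3: "armt J th x 1 0 = 0" "armt J th x (-1) 0 = 0" "armt J th x 0 1 = 0" "armt J th x 0 (-1) = 0" for th
          unfolding armt_def x using a3 b3 by (simp_all add: full_def)
        have nf: "\<not> full x" using a3 unfolding x full_def by simp
        have pcv: "pc J th x = star J th x" for th unfolding pc_def A3 using True nf by simp
        have tv: "tau (a,b) = 0" "tau (a,b+1) = 0" "tau (a,b-1) = 0" "tau (a+1,b) = 0" "tau (a-1,b) = 0"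
          using a3 b3 oa ob even_mod4[of "b+1"] even_mod4[of "b-1"] even_mod4[of "a+1"] even_mod4[of "a-1"]
          unfolding tau_def full_def nzf_def by simp_all
        have "star J ?t x = - 4 * J" by (simp add: star_def bd_def x tv)
        then have "pc J ?t x = - 4 * J" using pcv[of ?t] by simp
        then show ?thesis using star_lb[OF J, of \<theta> x] pcv by simp
      qed
    qed
  qed
qed



definition nbh :: "site set \<Rightarrow> site set" where
  "nbh K = {x. \<exists>c\<in>{-2..2}. \<exists>d\<in>{-2..2}. sh x c d \<in> K}"

definition loc :: "site set \<Rightarrow> (site \<Rightarrow> real) \<Rightarrow> bool" where
  "loc K f \<longleftrightarrow> (\<forall>x. f x \<noteq> 0 \<longrightarrow> x \<in> nbh K)"

lemma sh_sh [simp]: "sh (sh x a b) c d = sh x (a + c) (b + d)"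
  by (simp add: sh_def)

lemma sh_00 [simp]: "sh x 0 0 = x"
  by (simp add: sh_def)

lemma nbhI: "sh x c d \<in> K \<Longrightarrow> -2 \<le> c \<Longrightarrow> c \<le> 2 \<Longrightarrow> -2 \<le> d \<Longrightarrow> d \<le> 2 \<Longrightarrow> x \<in> nbh K"
  unfolding nbh_def by (rule CollectI, rule bexI[where x=c], rule bexI[where x=d]) auto

lemma nbhI0: "x \<in> K \<Longrightarrow> x \<in> nbh K"
  using nbhI[of x 0 0 K] by simp

lemma finite_nbh: assumes "finite K" shows "finite (nbh K)"
proof -
  have "nbh K \<subseteq> (\<lambda>(k, c, d). sh k (-c) (-d)) ` (K \<times> {-2..2} \<times> {-2..2})"
  proof
    fix x assume "x \<in> nbh K"
    then obtain c d where cd: "c \<in> {-2..2}" "d \<in> {-2..2}" "sh x c d \<in> K" unfolding nbh_def by auto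
    then have "x = (\<lambda>(k, c, d). sh k (-c) (-d)) (sh x c d, c, d)" by simp
    then show "x \<in> (\<lambda>(k, c, d). sh k (-c) (-d)) ` (K \<times> {-2..2} \<times> {-2..2})"
      using cd by blast
  qed
  moreover have "finite ((\<lambda>(k, c, d). sh k (-c) (-d)) ` (K \<times> {-2..2} \<times> {-2..2}))"
    using assms by (intro finite_imageI finite_cartesian_product) auto
  ultimately show ?thesis by (rule finite_subset)
qed

lemma loc_finite: "loc K f \<Longrightarrow> finite K \<Longrightarrow> finite {x. f x \<noteq> 0}"
  unfolding loc_def by (rule finite_subset[OF _ finite_nbh]) auto

lemma loc_add: assumes "loc K f" "loc K g" shows "loc K (\<lambda>x. f x + g x)"
  unfolding loc_def
proof (intro allI impI)
  fix x assume "f x + g x \<noteq> 0"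
  then have "f x \<noteq> 0 \<or> g x \<noteq> 0" by auto
  then show "x \<in> nbh K" using assms unfolding loc_def by blast
qed

lemma Sum_any_add: "loc K f \<Longrightarrow> loc K g \<Longrightarrow> finite K \<Longrightarrow> Sum_any (\<lambda>x. f x + g x) = Sum_any f + Sum_any g"
  by (rule Sum_any.distrib) (auto intro: loc_finite)

lemma bij_sh: "bij (\<lambda>x. sh x c d)"
proof (rule bijI)
  show "inj (\<lambda>x. sh x c d)" by (rule injI) (auto simp: sh_def prod_eq_iff)
  show "surj (\<lambda>x. sh x c d)"
  proof -
    have "y = sh (sh y (-c) (-d)) c d" for y by simp
    then show ?thesis by blast
  qed
qed

lemma shiftB: "Sum_any (\<lambda>x. if full (sh x (2*c) (2*d)) then B (sh x (2*c) (2*d)) (sh x c d) else (0::real))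
  = Sum_any (\<lambda>y. if full y then B y (sh y (-c) (-d)) else 0)"
proof (rule Sum_any.reindex_cong[OF bij_sh[of "2*c" "2*d"], symmetric])
  show "(\<lambda>y. if full y then B y (sh y (-c) (-d)) else 0) \<circ> (\<lambda>x. sh x (2*c) (2*d)) =
    (\<lambda>x. if full (sh x (2*c) (2*d)) then B (sh x (2*c) (2*d)) (sh x c d) else 0)"
    by (rule ext) (simp add: algebra_simps)
qed

lemma shiftF: "Sum_any (\<lambda>x. if full (sh x (2*c) (2*d)) then F (sh x c d) else (0::real))
  = Sum_any (\<lambda>m. if full (sh m c d) then F m else 0)"
proof (rule Sum_any.reindex_cong[OF bij_sh[of c d], symmetric])
  show "(\<lambda>m. if full (sh m c d) then F m else 0) \<circ> (\<lambda>x. sh x c d) =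
    (\<lambda>x. if full (sh x (2*c) (2*d)) then F (sh x c d) else 0)"
    by (rule ext) (simp add: algebra_simps mult_2)
qed



definition SBf :: "(site \<Rightarrow> site \<Rightarrow> real) \<Rightarrow> site \<Rightarrow> real" where
  "SBf B x = B x (sh x 1 0) + B x (sh x (-1) 0) + B x (sh x 0 1) + B x (sh x 0 (-1))"

definition Ab :: "(site \<Rightarrow> site \<Rightarrow> real) \<Rightarrow> site \<Rightarrow> int \<Rightarrow> int \<Rightarrow> real" where
  "Ab B x c d = (if full (sh x (2*c) (2*d)) then B (sh x (2*c) (2*d)) (sh x c d) else 0)"

definition Af :: "(site \<Rightarrow> real) \<Rightarrow> site \<Rightarrow> int \<Rightarrow> int \<Rightarrow> real" where
  "Af F x c d = (if full (sh x (2*c) (2*d)) then F (sh x c d) else 0)"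

lemma full_ctr: "full x \<Longrightarrow> ctr x"
  unfolding full_def ctr_def by presburger

lemma nzf_one: "nzf m \<Longrightarrow> (if full (sh m 1 0) then 1 else 0) + (if full (sh m (-1) 0) then 1 else 0)
   + (if full (sh m 0 1) then 1 else 0) + (if full (sh m 0 (-1)) then 1 else (0::real)) = 1"
proof -
  assume "nzf m"
  obtain a b where m: "m = (a,b)" by (cases m)
  show ?thesis
  proof (cases "even a")
    case True
    then have b: "b mod 4 = 1" using \<open>nzf m\<close> unfolding nzf_def m by (auto dest: even_mod4)
    have "(a + 1) mod 4 = 1 \<and> (a - 1) mod 4 \<noteq> 1 \<or> (a + 1) mod 4 \<noteq> 1 \<and> (a - 1) mod 4 = 1"
      using True by presburger
    moreover have "(b+1) mod 4 \<noteq> 1" "(b - 1) mod 4 \<noteq> 1" using b by presburger+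
    ultimately show ?thesis unfolding m full_def using b by auto
  next
    case False
    then have a: "a mod 4 = 1" "even b" using \<open>nzf m\<close> unfolding nzf_def m by auto
    have "(b + 1) mod 4 = 1 \<and> (b - 1) mod 4 \<noteq> 1 \<or> (b + 1) mod 4 \<noteq> 1 \<and> (b - 1) mod 4 = 1"
      using a by presburger
    moreover have "(a+1) mod 4 \<noteq> 1" "(a - 1) mod 4 \<noteq> 1" using a by presburger+
    ultimately show ?thesis unfolding m full_def using a by auto
  qed
qed

lemma Sum_any_add4:
  assumes "finite K" "loc K f1" "loc K f2" "loc K f3" "loc K f4"
  shows "Sum_any (\<lambda>x. f1 x + f2 x + f3 x + f4 x) = Sum_any f1 + Sum_any f2 + Sum_any f3 + Sum_any f4"
proof -
  have l12: "loc K (\<lambda>x. f1 x + f2 x)" using assms loc_add by blast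
  then have l123: "loc K (\<lambda>x. f1 x + f2 x + f3 x)" using assms loc_add[of K "\<lambda>x. f1 x + f2 x" f3] by blast
  have "Sum_any (\<lambda>x. f1 x + f2 x + f3 x + f4 x) = Sum_any (\<lambda>x. f1 x + f2 x + f3 x) + Sum_any f4"
    using Sum_any_add[OF l123 assms(5) assms(1)] .
  also have "Sum_any (\<lambda>x. f1 x + f2 x + f3 x) = Sum_any (\<lambda>x. f1 x + f2 x) + Sum_any f3"
    using Sum_any_add[OF l12 assms(4) assms(1)] .
  also have "Sum_any (\<lambda>x. f1 x + f2 x) = Sum_any f1 + Sum_any f2"
    using Sum_any_add[OF assms(2) assms(3) assms(1)] .
  finally show ?thesis .
qed

context
  fixes K :: "site set" and B :: "site \<Rightarrow> site \<Rightarrow> real" and F :: "site \<Rightarrow> real"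
  assumes K: "finite K"
    and Bl: "\<And>u v. B u v \<noteq> 0 \<Longrightarrow> u \<in> K \<or> v \<in> K"
    and Fl: "\<And>m. F m \<noteq> 0 \<Longrightarrow> m \<in> K \<and> nzf m"
begin

lemma locB: "\<lbrakk>B (sh x c1 d1) (sh x c2 d2) \<noteq> 0; \<bar>c1\<bar> \<le> 2; \<bar>c2\<bar> \<le> 2; \<bar>d1\<bar> \<le> 2; \<bar>d2\<bar> \<le> 2\<rbrakk> \<Longrightarrow> x \<in> nbh K"
  using Bl[of "sh x c1 d1" "sh x c2 d2"] nbhI[of x c1 d1 K] nbhI[of x c2 d2 K] by auto

lemma locB0: "\<lbrakk>B x (sh x c2 d2) \<noteq> 0; \<bar>c2\<bar> \<le> 2; \<bar>d2\<bar> \<le> 2\<rbrakk> \<Longrightarrow> x \<in> nbh K"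
  using locB[of x 0 0 c2 d2] by simp

lemma locF: "\<lbrakk>F (sh x c d) \<noteq> 0; \<bar>c\<bar> \<le> 2; \<bar>d\<bar> \<le> 2\<rbrakk> \<Longrightarrow> x \<in> nbh K"
  using Fl[of "sh x c d"] nbhI[of x c d K] by auto

lemma loc_SB: "loc K (SBf B)"
  unfolding loc_def SBf_def
proof (intro allI impI)
  fix x assume h: "B x (sh x 1 0) + B x (sh x (-1) 0) + B x (sh x 0 1) + B x (sh x 0 (-1)) \<noteq> 0"
  then have "B x (sh x 1 0) \<noteq> 0 \<or> B x (sh x (-1) 0) \<noteq> 0 \<or> B x (sh x 0 1) \<noteq> 0 \<or> B x (sh x 0 (-1)) \<noteq> 0"
    by auto
  then show "x \<in> nbh K" using locB0[of x 1 0] locB0[of x "-1" 0] locB0[of x 0 1] locB0[of x 0 "-1"] by auto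
qed

lemma loc_if: "loc K f \<Longrightarrow> loc K (\<lambda>x. if P x then f x else 0)"
  unfolding loc_def by auto

lemma loc_F: "loc K F"
  unfolding loc_def using locF[of _ 0 0] by auto

lemma loc_Ab: "\<bar>c\<bar> \<le> 1 \<Longrightarrow> \<bar>d\<bar> \<le> 1 \<Longrightarrow> loc K (\<lambda>x. Ab B x c d)"
  unfolding loc_def Ab_def using locB[of _ "2*c" "2*d" c d] by (auto split: if_splits)

lemma loc_Af: "\<bar>c\<bar> \<le> 1 \<Longrightarrow> \<bar>d\<bar> \<le> 1 \<Longrightarrow> loc K (\<lambda>x. Af F x c d)"
  unfolding loc_def Af_def using locF[of _ c d] by (auto split: if_splits)

lemma loc_Bs: "\<bar>c\<bar> \<le> 1 \<Longrightarrow> \<bar>d\<bar> \<le> 1 \<Longrightarrow> loc K (\<lambda>y. if full y then B y (sh y c d) else 0)"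
  unfolding loc_def using locB0[of _ c d] by (auto split: if_splits)

lemma loc_Fs: "loc K (\<lambda>m. if full (sh m c d) then F m else 0)"
  unfolding loc_def using locF[of _ 0 0] by (auto split: if_splits)

lemma sumAb: "\<bar>c\<bar> \<le> 1 \<Longrightarrow> Sum_any (\<lambda>x. Ab B x c d) = Sum_any (\<lambda>y. if full y then B y (sh y (-c) (-d)) else 0)"
  unfolding Ab_def by (rule shiftB)

lemma sumAb': "\<bar>c\<bar> \<le> 1 \<Longrightarrow> c' = -c \<Longrightarrow> d' = -d \<Longrightarrow> Sum_any (\<lambda>x. Ab B x c d) = Sum_any (\<lambda>y. if full y then B y (sh y c' d') else 0)"
  using sumAb[of c d] by (simp only:)

lemma sumAf: "Sum_any (\<lambda>x. Af F x c d) = Sum_any (\<lambda>m. if full (sh m c d) then F m else 0)"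
  unfolding Af_def by (rule shiftF)

lemma sumQ: "Sum_any (\<lambda>x. Ab B x 1 0) + Sum_any (\<lambda>x. Ab B x (-1) 0) + Sum_any (\<lambda>x. Ab B x 0 1) + Sum_any (\<lambda>x. Ab B x 0 (-1))
   = Sum_any (\<lambda>x. if full x then SBf B x else 0)"
proof -
  have "Sum_any (\<lambda>x. Ab B x 1 0) + Sum_any (\<lambda>x. Ab B x (-1) 0) + Sum_any (\<lambda>x. Ab B x 0 1) + Sum_any (\<lambda>x. Ab B x 0 (-1))
    = Sum_any (\<lambda>y. if full y then B y (sh y (-1) 0) else 0) + Sum_any (\<lambda>y. if full y then B y (sh y 1 0) else 0)
      + Sum_any (\<lambda>y. if full y then B y (sh y 0 (-1)) else 0) + Sum_any (\<lambda>y. if full y then B y (sh y 0 1) else 0)"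
  proof -
    have q1: "Sum_any (\<lambda>x. Ab B x 1 0) = Sum_any (\<lambda>y. if full y then B y (sh y (-1) 0) else 0)" by (rule sumAb') simp_all
    have q2: "Sum_any (\<lambda>x. Ab B x (-1) 0) = Sum_any (\<lambda>y. if full y then B y (sh y 1 0) else 0)" by (rule sumAb') simp_all
    have q3: "Sum_any (\<lambda>x. Ab B x 0 1) = Sum_any (\<lambda>y. if full y then B y (sh y 0 (-1)) else 0)" by (rule sumAb') simp_all
    have q4: "Sum_any (\<lambda>x. Ab B x 0 (-1)) = Sum_any (\<lambda>y. if full y then B y (sh y 0 1) else 0)" by (rule sumAb') simp_all
    show ?thesis by (simp only: q1 q2 q3 q4)
  qed
  also have "\<dots> = Sum_any (\<lambda>y. (if full y then B y (sh y (-1) 0) else 0) + (if full y then B y (sh y 1 0) else 0)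
      + (if full y then B y (sh y 0 (-1)) else 0) + (if full y then B y (sh y 0 1) else 0))"
    by (rule Sum_any_add4[symmetric, OF K]) (auto intro!: loc_Bs)
  also have "\<dots> = Sum_any (\<lambda>x. if full x then SBf B x else 0)"
    by (rule Sum_any.cong) (simp add: SBf_def)
  finally show ?thesis .
qed

lemma sumF: "Sum_any (\<lambda>x. Af F x 1 0) + Sum_any (\<lambda>x. Af F x (-1) 0) + Sum_any (\<lambda>x. Af F x 0 1) + Sum_any (\<lambda>x. Af F x 0 (-1))
   = Sum_any F"
proof -
  have "Sum_any (\<lambda>x. Af F x 1 0) + Sum_any (\<lambda>x. Af F x (-1) 0) + Sum_any (\<lambda>x. Af F x 0 1) + Sum_any (\<lambda>x. Af F x 0 (-1))
    = Sum_any (\<lambda>m. if full (sh m 1 0) then F m else 0) + Sum_any (\<lambda>m. if full (sh m (-1) 0) then F m else 0)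
     + Sum_any (\<lambda>m. if full (sh m 0 1) then F m else 0) + Sum_any (\<lambda>m. if full (sh m 0 (-1)) then F m else 0)"
    by (simp only: sumAf)
  also have "\<dots> = Sum_any (\<lambda>m. (if full (sh m 1 0) then F m else 0) + (if full (sh m (-1) 0) then F m else 0)
     + (if full (sh m 0 1) then F m else 0) + (if full (sh m 0 (-1)) then F m else 0))"
    by (rule Sum_any_add4[symmetric, OF K]) (auto intro!: loc_Fs)
  also have "\<dots> = Sum_any F"
  proof (rule Sum_any.cong)
    fix m
    show "(if full (sh m 1 0) then F m else 0) + (if full (sh m (-1) 0) then F m else 0)
     + (if full (sh m 0 1) then F m else 0) + (if full (sh m 0 (-1)) then F m else 0) = F m"
    proof (cases "F m = 0")
      case True then show ?thesis by simp
    next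
      case False
      then have "nzf m" using Fl by blast
      from nzf_one[OF this] have "((if full (sh m 1 0) then 1 else 0) + (if full (sh m (-1) 0) then 1 else 0)
   + (if full (sh m 0 1) then 1 else 0) + (if full (sh m 0 (-1)) then 1 else (0::real))) * F m = F m" by simp
      then show ?thesis by (simp add: algebra_simps split: if_splits)
    qed
  qed
  finally show ?thesis .
qed

lemma regroup:
  "Sum_any (\<lambda>x. (if ctr x then SBf B x else 0) + F x) =
   Sum_any (\<lambda>x. (if ctr x \<and> \<not> full x then SBf B x else 0)
      + (Ab B x 1 0 + Af F x 1 0) + (Ab B x (-1) 0 + Af F x (-1) 0) + (Ab B x 0 1 + Af F x 0 1) + (Ab B x 0 (-1) + Af F x 0 (-1)))"
proof -
  let ?P = "\<lambda>x. if ctr x \<and> \<not> full x then SBf B x else 0"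
  let ?Q = "\<lambda>x. if full x then SBf B x else 0"
  have lP: "loc K ?P" and lQ: "loc K ?Q" by (auto intro!: loc_if loc_SB)
  have lAb: "loc K (\<lambda>x. Ab B x 1 0)" "loc K (\<lambda>x. Ab B x (-1) 0)" "loc K (\<lambda>x. Ab B x 0 1)" "loc K (\<lambda>x. Ab B x 0 (-1))"
    by (auto intro!: loc_Ab)
  have lAf: "loc K (\<lambda>x. Af F x 1 0)" "loc K (\<lambda>x. Af F x (-1) 0)" "loc K (\<lambda>x. Af F x 0 1)" "loc K (\<lambda>x. Af F x 0 (-1))"
    by (auto intro!: loc_Af)
  have "Sum_any (\<lambda>x. (if ctr x then SBf B x else 0) + F x) = Sum_any (\<lambda>x. ?P x + (?Q x + F x))"
    by (rule Sum_any.cong) (auto dest: full_ctr)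
  also have "\<dots> = Sum_any ?P + (Sum_any ?Q + Sum_any F)"
    using lP lQ loc_F K by (simp add: Sum_any_add loc_add)
  also have "Sum_any ?Q = Sum_any (\<lambda>x. Ab B x 1 0) + Sum_any (\<lambda>x. Ab B x (-1) 0) + Sum_any (\<lambda>x. Ab B x 0 1) + Sum_any (\<lambda>x. Ab B x 0 (-1))"
    by (rule sumQ[symmetric])
  also have "Sum_any F = Sum_any (\<lambda>x. Af F x 1 0) + Sum_any (\<lambda>x. Af F x (-1) 0) + Sum_any (\<lambda>x. Af F x 0 1) + Sum_any (\<lambda>x. Af F x 0 (-1))"
    by (rule sumF[symmetric])
  also have "Sum_any ?P + (Sum_any (\<lambda>x. Ab B x 1 0) + Sum_any (\<lambda>x. Ab B x (-1) 0) + Sum_any (\<lambda>x. Ab B x 0 1) + Sum_any (\<lambda>x. Ab B x 0 (-1))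
     + (Sum_any (\<lambda>x. Af F x 1 0) + Sum_any (\<lambda>x. Af F x (-1) 0) + Sum_any (\<lambda>x. Af F x 0 1) + Sum_any (\<lambda>x. Af F x 0 (-1))))
    = Sum_any (\<lambda>x. ?P x
      + (Ab B x 1 0 + Af F x 1 0) + (Ab B x (-1) 0 + Af F x (-1) 0) + (Ab B x 0 1 + Af F x 0 1) + (Ab B x 0 (-1) + Af F x 0 (-1)))"
    using lP lAb lAf K by (simp add: Sum_any_add loc_add algebra_simps)
  finally show ?thesis .
qed

end



lemma Sum_any_minus: "Sum_any (\<lambda>x. - f x) = - Sum_any (f :: 'a \<Rightarrow> real)"
  unfolding Sum_any.expand_set by (simp add: sum_negf)

lemma nn_nbh: assumes "nn i j" "i \<in> K" shows "j \<in> nbh K"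
proof -
  from assms(1) have "sh j (-1) 0 = i \<or> sh j 1 0 = i \<or> sh j 0 (-1) = i \<or> sh j 0 1 = i"
    unfolding nn_iff sh_def by auto
  then show ?thesis using assms(2) nbhI[of j "-1" 0 K] nbhI[of j 1 0 K] nbhI[of j 0 "-1" K] nbhI[of j 0 1 K]
    by auto
qed

lemma bond_ctr: "i \<in> dlat \<Longrightarrow> j \<in> dlat \<Longrightarrow> nn i j \<Longrightarrow> ctr i \<longleftrightarrow> \<not> ctr j"
  unfolding nn_iff dlat_def ctr_def sh_def by (cases i; cases j) auto

lemma ctr_dlat: "ctr x \<Longrightarrow> x \<in> dlat" unfolding ctr_def dlat_def by auto

lemma ctr_nb_dlat: "ctr x \<Longrightarrow> sh x 1 0 \<in> dlat \<and> sh x (-1) 0 \<in> dlat \<and> sh x 0 1 \<in> dlat \<and> sh x 0 (-1) \<in> dlat"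
  unfolding ctr_def dlat_def sh_def by auto

lemma not_nbh: assumes "x \<notin> nbh K" "\<bar>c\<bar> \<le> 2" "\<bar>d\<bar> \<le> 2" shows "sh x c d \<notin> K"
proof
  assume "sh x c d \<in> K"
  then have "x \<in> nbh K" by (rule nbhI) (use assms(2,3) in arith)+
  then show False using assms(1) by simp
qed

lemma cos_comm: "cos (a - b) = cos (b - a)"
  by (metis cos_minus minus_diff_eq)

lemma hloc_diff:
  fixes J :: real and Lam :: "site set" and \<theta> \<theta>0 :: "site \<Rightarrow> real"
  assumes fin: "finite Lam" and agree: "\<And>p. p \<notin> Lam \<Longrightarrow> \<theta> p = \<theta>0 p"
  shows "H_loc J Lam \<theta> - H_loc J Lam \<theta>0 =
    Sum_any (\<lambda>x. (if ctr x then star J \<theta> x - star J \<theta>0 x else 0) + (fd \<theta> x - fd \<theta>0 x))"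
proof -
  define E0 where "E0 = {(i,j). i \<in> dlat \<and> j \<in> dlat \<and> nn i j}"
  define E where "E = {(i,j). i \<in> dlat \<and> j \<in> dlat \<and> nn i j \<and> (i \<in> Lam \<or> j \<in> Lam)}"
  define D where "D q = J * cos (\<theta> (fst q) - \<theta> (snd q)) - J * cos (\<theta>0 (fst q) - \<theta>0 (snd q))" for q
  define G where "G q = (if q \<in> E0 then D q else 0)" for q
  define G1 where "G1 q = (if q \<in> E0 \<and> ctr (fst q) then D q else 0)" for q
  define G2 where "G2 q = (if q \<in> E0 \<and> ctr (snd q) then D q else 0)" for q
  have EE0: "E \<subseteq> E0" unfolding E_def E0_def by auto
  have finE: "finite E"
  proof -
    have "E \<subseteq> (Lam \<times> nbh Lam) \<union> (nbh Lam \<times> Lam)"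
      unfolding E_def using nn_nbh nn_sym by blast
    moreover have "finite ((Lam \<times> nbh Lam) \<union> (nbh Lam \<times> Lam))" using fin finite_nbh by auto
    ultimately show ?thesis by (rule finite_subset)
  qed
  have Dz: "D q = 0" if "fst q \<notin> Lam" "snd q \<notin> Lam" for q
    using that agree unfolding D_def by simp
  have suppG: "{q. G q \<noteq> 0} \<subseteq> E"
  proof
    fix q assume "q \<in> {q. G q \<noteq> 0}"
    then have q: "q \<in> E0" "D q \<noteq> 0" unfolding G_def by (auto split: if_splits)
    then have "fst q \<in> Lam \<or> snd q \<in> Lam" using Dz by blast
    then show "q \<in> E" using q(1) unfolding E_def E0_def by (cases q) auto
  qed
  have suppG1: "{q. G1 q \<noteq> 0} \<subseteq> E" and suppG2: "{q. G2 q \<noteq> 0} \<subseteq> E"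
    using suppG unfolding G_def G1_def G2_def by (auto split: if_splits)
  have fG1: "finite {q. G1 q \<noteq> 0}" and fG2: "finite {q. G2 q \<noteq> 0}"
    using suppG1 suppG2 finE finite_subset by blast+
  have HB: "H_loc J Lam \<theta> - H_loc J Lam \<theta>0 =
     - (1/2) * (sum (\<lambda>q. J * cos (\<theta> (fst q) - \<theta> (snd q))) E - sum (\<lambda>q. J * cos (\<theta>0 (fst q) - \<theta>0 (snd q))) E)
     - (sum (\<lambda>i. field i * sin (\<theta> i)) Lam - sum (\<lambda>i. field i * sin (\<theta>0 i)) Lam)"
    unfolding H_loc_def E_def split_def by (simp add: algebra_simps)
  have "sum (\<lambda>q. J * cos (\<theta> (fst q) - \<theta> (snd q))) E - sum (\<lambda>q. J * cos (\<theta>0 (fst q) - \<theta>0 (snd q))) E = sum D E"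
    unfolding D_def by (simp add: sum_subtractf)
  also have "\<dots> = sum G E" using EE0 unfolding G_def by (intro sum.cong) auto
  also have "\<dots> = Sum_any G" using Sum_any.expand_superset[OF finE suppG] by simp
  also have "\<dots> = Sum_any G1 + Sum_any G2"
  proof -
    have "G = (\<lambda>q. G1 q + G2 q)"
    proof
      fix q show "G q = G1 q + G2 q"
        unfolding G_def G1_def G2_def E0_def using bond_ctr[of "fst q" "snd q"] by (cases q) auto
    qed
    then show ?thesis using Sum_any.distrib[OF fG1 fG2] by simp
  qed
  also have "Sum_any G2 = Sum_any G1"
  proof (rule Sum_any.reindex_cong[of prod.swap])
    show "bij (prod.swap :: site \<times> site \<Rightarrow> _)" by (rule bijI) (auto intro!: injI simp: image_def)
    show "G2 \<circ> prod.swap = G1"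
    proof
      fix q :: "site \<times> site"
      have Dsw: "D (prod.swap q) = D q" unfolding D_def
        using cos_comm[of "\<theta> (fst q)" "\<theta> (snd q)"] cos_comm[of "\<theta>0 (fst q)" "\<theta>0 (snd q)"] by simp
      have Esw: "prod.swap q \<in> E0 \<longleftrightarrow> q \<in> E0" unfolding E0_def using nn_sym by (cases q) auto
      show "(G2 \<circ> prod.swap) q = G1 q"
        unfolding G1_def G2_def comp_def using Dsw Esw by simp
    qed
  qed
  also have "Sum_any G1 = Sum_any (\<lambda>i. if ctr i then D (i, sh i 1 0) + D (i, sh i (-1) 0) + D (i, sh i 0 1) + D (i, sh i 0 (-1)) else 0)"
  proof -
    have "Sum_any (\<lambda>a. Sum_any (\<lambda>b. G1 (a, b))) = Sum_any (\<lambda>(a, b). G1 (a, b))"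
    proof (rule Sum_any.cartesian_product[of "fst ` E \<times> snd ` E"])
      show "finite (fst ` E \<times> snd ` E)" using finE by auto
      show "{a. \<exists>b. G1 (a, b) \<noteq> 0} \<times> {b. \<exists>a. G1 (a, b) \<noteq> 0} \<subseteq> fst ` E \<times> snd ` E"
      proof
        fix p assume "p \<in> {a. \<exists>b. G1 (a, b) \<noteq> 0} \<times> {b. \<exists>a. G1 (a, b) \<noteq> 0}"
        then obtain a b a1 b1 where p: "p = (a, b)" "G1 (a, b1) \<noteq> 0" "G1 (a1, b) \<noteq> 0" by blast
        then have "(a, b1) \<in> E" "(a1, b) \<in> E" using suppG1 by blast+
        then have "a \<in> fst ` E" "b \<in> snd ` E" by (metis fst_conv image_eqI, metis snd_conv image_eqI)
        then show "p \<in> fst ` E \<times> snd ` E" using p by simp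
      qed
    qed
    moreover have "(\<lambda>(a, b). G1 (a, b)) = G1" by auto
    moreover have "Sum_any (\<lambda>b. G1 (i, b)) = (if ctr i then D (i, sh i 1 0) + D (i, sh i (-1) 0) + D (i, sh i 0 1) + D (i, sh i 0 (-1)) else 0)" for i
    proof (cases "ctr i")
      case False
      then have "(\<lambda>b. G1 (i, b)) = (\<lambda>_. 0)" unfolding G1_def by auto
      then have "Sum_any (\<lambda>b. G1 (i, b)) = Sum_any (\<lambda>_::site. 0::real)" by (rule arg_cong)
      then show ?thesis using False by simp
    next
      case True
      define N where "N = {sh i 1 0, sh i (-1) 0, sh i 0 1, sh i 0 (-1)}"
      have "(\<lambda>b. G1 (i, b)) = (\<lambda>b. if b \<in> N then D (i, b) else 0)"
      proof
        fix b show "G1 (i, b) = (if b \<in> N then D (i, b) else 0)"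
          unfolding G1_def E0_def N_def using True ctr_dlat[OF True] ctr_nb_dlat[OF True]
          by (auto simp: nn_iff)
      qed
      moreover have "finite N" unfolding N_def by simp
      ultimately have "Sum_any (\<lambda>b. G1 (i, b)) = sum (\<lambda>b. D (i, b)) N"
        using Sum_any.conditionalize[of N "\<lambda>b. D (i, b)"] by (simp only:)
      also have "\<dots> = D (i, sh i 1 0) + D (i, sh i (-1) 0) + D (i, sh i 0 1) + D (i, sh i 0 (-1))"
        unfolding N_def by (simp add: sh_def)
      finally show ?thesis using True by simp
    qed
    ultimately show ?thesis by (simp only:)
  qed
  finally have bondeq: "sum (\<lambda>q. J * cos (\<theta> (fst q) - \<theta> (snd q))) E - sum (\<lambda>q. J * cos (\<theta>0 (fst q) - \<theta>0 (snd q))) E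
     = 2 * Sum_any (\<lambda>i. if ctr i then D (i, sh i 1 0) + D (i, sh i (-1) 0) + D (i, sh i 0 1) + D (i, sh i 0 (-1)) else 0)"
    by simp
  have starD: "star J \<theta> i - star J \<theta>0 i = - (D (i, sh i 1 0) + D (i, sh i (-1) 0) + D (i, sh i 0 1) + D (i, sh i 0 (-1)))" for i
    unfolding star_def bd_def D_def by simp
  have P: "- (1/2) * (sum (\<lambda>q. J * cos (\<theta> (fst q) - \<theta> (snd q))) E - sum (\<lambda>q. J * cos (\<theta>0 (fst q) - \<theta>0 (snd q))) E)
     = Sum_any (\<lambda>x. if ctr x then star J \<theta> x - star J \<theta>0 x else 0)"
    unfolding bondeq starD
    using Sum_any_minus[of "\<lambda>i. if ctr i then D (i, sh i 1 0) + D (i, sh i (-1) 0) + D (i, sh i 0 1) + D (i, sh i 0 (-1)) else 0"]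
    by (simp add: if_distrib[of uminus] cong: if_cong)
  have suppF: "{x. fd \<theta> x - fd \<theta>0 x \<noteq> 0} \<subseteq> Lam"
  proof
    fix x assume x: "x \<in> {x. fd \<theta> x - fd \<theta>0 x \<noteq> 0}"
    show "x \<in> Lam"
    proof (rule ccontr)
      assume "x \<notin> Lam"
      then have "\<theta> x = \<theta>0 x" by (rule agree)
      then show False using x unfolding fd_def by simp
    qed
  qed
  have Q: "- (sum (\<lambda>i. field i * sin (\<theta> i)) Lam - sum (\<lambda>i. field i * sin (\<theta>0 i)) Lam)
     = Sum_any (\<lambda>x. fd \<theta> x - fd \<theta>0 x)"
  proof -
    have "Sum_any (\<lambda>x. fd \<theta> x - fd \<theta>0 x) = sum (\<lambda>x. fd \<theta> x - fd \<theta>0 x) Lam"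
      by (rule Sum_any.expand_superset[OF fin suppF])
    then show ?thesis by (simp add: fd_def sum_subtractf)
  qed
  have locP: "loc Lam (\<lambda>x. if ctr x then star J \<theta> x - star J \<theta>0 x else 0)"
    unfolding loc_def
  proof (intro allI impI)
    fix x assume h: "(if ctr x then star J \<theta> x - star J \<theta>0 x else 0) \<noteq> 0"
    show "x \<in> nbh Lam"
    proof (rule ccontr)
      assume "x \<notin> nbh Lam"
      then have "sh x 0 0 \<notin> Lam" "sh x 1 0 \<notin> Lam" "sh x (-1) 0 \<notin> Lam" "sh x 0 1 \<notin> Lam" "sh x 0 (-1) \<notin> Lam"
        using not_nbh[of x Lam 0 0] not_nbh[of x Lam 1 0] not_nbh[of x Lam "-1" 0] not_nbh[of x Lam 0 1] not_nbh[of x Lam 0 "-1"]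
        by (simp_all del: sh_00)
      then have "star J \<theta> x = star J \<theta>0 x" unfolding star_def bd_def using agree by simp
      then show False using h by (cases "ctr x") auto
    qed
  qed
  have locQ: "loc Lam (\<lambda>x. fd \<theta> x - fd \<theta>0 x)"
    unfolding loc_def using suppF nbhI0 by auto
  show ?thesis
    using HB P Q Sum_any_add[OF locP locQ fin] by linarith
qed



lemma Sum_any_nonneg: "(\<And>x. f x \<ge> 0) \<Longrightarrow> Sum_any f \<ge> (0::real)"
  unfolding Sum_any.expand_set by (rule sum_nonneg) auto

lemma gs_main:
  fixes J \<beta> :: real
  assumes J: "J > 0" and cb: "cos \<beta> = J / sqrt (J^2 + 4)" and sb: "sin \<beta> = 2 / sqrt (J^2 + 4)"
  shows "ground_state J (\<lambda>p. \<beta> * tau p)"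
  unfolding ground_state_def
proof (intro allI impI)
  fix Lam :: "site set" and \<theta>' :: "site \<Rightarrow> real"
  assume fin: "finite Lam" and sub: "Lam \<subseteq> dlat" and ag: "\<forall>i\<in>dlat - Lam. \<theta>' i = \<beta> * tau i"
  let ?s = "\<lambda>p. \<beta> * tau p"
  define \<theta> where "\<theta> p = (if p \<in> Lam then \<theta>' p else ?s p)" for p
  have eqd: "\<theta> p = \<theta>' p" if "p \<in> dlat" for p using ag that unfolding \<theta>_def by auto
  have agree: "\<theta> p = ?s p" if "p \<notin> Lam" for p using that unfolding \<theta>_def by simp
  have H1: "H_loc J Lam \<theta>' = H_loc J Lam \<theta>"
    unfolding H_loc_def
  proof -
    have "(\<Sum>(i, j)\<in>{(i, j). i \<in> dlat \<and> j \<in> dlat \<and> nn i j \<and> (i \<in> Lam \<or> j \<in> Lam)}. J * cos (\<theta>' i - \<theta>' j))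
        = (\<Sum>(i, j)\<in>{(i, j). i \<in> dlat \<and> j \<in> dlat \<and> nn i j \<and> (i \<in> Lam \<or> j \<in> Lam)}. J * cos (\<theta> i - \<theta> j))"
      by (rule sum.cong) (auto simp: eqd)
    moreover have "(\<Sum>i\<in>Lam. field i * sin (\<theta>' i)) = (\<Sum>i\<in>Lam. field i * sin (\<theta> i))"
      by (rule sum.cong) (auto simp: \<theta>_def)
    ultimately show "- (1 / 2) * (\<Sum>(i, j)\<in>{(i, j). i \<in> dlat \<and> j \<in> dlat \<and> nn i j \<and> (i \<in> Lam \<or> j \<in> Lam)}. J * cos (\<theta>' i - \<theta>' j)) -
    (\<Sum>i\<in>Lam. field i * sin (\<theta>' i)) =
    - (1 / 2) * (\<Sum>(i, j)\<in>{(i, j). i \<in> dlat \<and> j \<in> dlat \<and> nn i j \<and> (i \<in> Lam \<or> j \<in> Lam)}. J * cos (\<theta> i - \<theta> j)) -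
    (\<Sum>i\<in>Lam. field i * sin (\<theta> i))" by simp
  qed
  define B where "B u v = bd J \<theta> u v - bd J ?s u v" for u v
  define F where "F m = fd \<theta> m - fd ?s m" for m
  have Bl: "u \<in> Lam \<or> v \<in> Lam" if "B u v \<noteq> 0" for u v
  proof (rule ccontr)
    assume "\<not> (u \<in> Lam \<or> v \<in> Lam)"
    then have "\<theta> u = ?s u" "\<theta> v = ?s v" using agree by auto
    then show False using that unfolding B_def bd_def by simp
  qed
  have Fl: "m \<in> Lam \<and> nzf m" if "F m \<noteq> 0" for m
  proof
    show "m \<in> Lam"
    proof (rule ccontr)
      assume "m \<notin> Lam"
      then have "\<theta> m = ?s m" using agree by auto
      then show False using that unfolding F_def fd_def by simp
    qed
    have "field m \<noteq> 0" using that unfolding F_def fd_def by auto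
    then show "nzf m" unfolding field_eq by (auto split: if_splits)
  qed
  have "H_loc J Lam \<theta> - H_loc J Lam ?s =
    Sum_any (\<lambda>x. (if ctr x then star J \<theta> x - star J ?s x else 0) + (fd \<theta> x - fd ?s x))"
    by (rule hloc_diff[OF fin agree])
  also have "\<dots> = Sum_any (\<lambda>x. (if ctr x then SBf B x else 0) + F x)"
    by (rule Sum_any.cong) (simp add: star_def SBf_def B_def F_def)
  also have "\<dots> = Sum_any (\<lambda>x. (if ctr x \<and> \<not> full x then SBf B x else 0)
      + (Ab B x 1 0 + Af F x 1 0) + (Ab B x (-1) 0 + Af F x (-1) 0) + (Ab B x 0 1 + Af F x 0 1) + (Ab B x 0 (-1) + Af F x 0 (-1)))"
    by (rule regroup[OF fin Bl Fl])
  also have "\<dots> = Sum_any (\<lambda>x. pc J \<theta> x - pc J ?s x)"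
  proof (rule Sum_any.cong)
    fix x
    have a: "armt J \<theta> x c d - armt J ?s x c d = Ab B x c d + Af F x c d" for c d
      unfolding armt_def Ab_def Af_def B_def F_def by simp
    have st: "star J \<theta> x - star J ?s x = SBf B x" unfolding star_def SBf_def B_def by simp
    show "(if ctr x \<and> \<not> full x then SBf B x else 0)
      + (Ab B x 1 0 + Af F x 1 0) + (Ab B x (-1) 0 + Af F x (-1) 0) + (Ab B x 0 1 + Af F x 0 1) + (Ab B x 0 (-1) + Af F x 0 (-1))
      = pc J \<theta> x - pc J ?s x"
    proof (cases "ctr x \<and> \<not> full x")
      case True
      then have "pc J \<theta> x - pc J ?s x = (star J \<theta> x - star J ?s x) + (armt J \<theta> x 1 0 - armt J ?s x 1 0)
        + (armt J \<theta> x (-1) 0 - armt J ?s x (-1) 0) + (armt J \<theta> x 0 1 - armt J ?s x 0 1) + (armt J \<theta> x 0 (-1) - armt J ?s x 0 (-1))"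
        unfolding pc_def if_P[OF True] by simp
      then show ?thesis unfolding st a if_P[OF True] by simp
    next
      case False
      then have "pc J \<theta> x - pc J ?s x = (armt J \<theta> x 1 0 - armt J ?s x 1 0)
        + (armt J \<theta> x (-1) 0 - armt J ?s x (-1) 0) + (armt J \<theta> x 0 1 - armt J ?s x 0 1) + (armt J \<theta> x 0 (-1) - armt J ?s x 0 (-1))"
        unfolding pc_def if_not_P[OF False] by simp
      then show ?thesis unfolding a if_not_P[OF False] by simp
    qed
  qed
  also have "\<dots> \<ge> 0"
    by (rule Sum_any_nonneg) (use pc_ge[OF J cb sb] in simp)
  finally show "H_loc J Lam ?s \<le> H_loc J Lam \<theta>'" using H1 by simp
qed

lemma H_refl: "H_loc J Lam (\<lambda>p. pi - \<theta> p) = H_loc J Lam \<theta>"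
proof -
  have "cos ((pi - a) - (pi - b)) = cos (a - b)" for a b :: real
    using cos_comm[of b a] by simp
  then show ?thesis unfolding H_loc_def by simp
qed

lemma gs_refl: assumes "ground_state J \<theta>" shows "ground_state J (\<lambda>p. pi - \<theta> p)"
  unfolding ground_state_def
proof (intro allI impI)
  fix Lam :: "site set" and \<theta>' :: "site \<Rightarrow> real"
  assume fin: "finite Lam" and sub: "Lam \<subseteq> dlat" and ag: "\<forall>i\<in>dlat - Lam. \<theta>' i = pi - \<theta> i"
  have "\<forall>i\<in>dlat - Lam. pi - \<theta>' i = \<theta> i" using ag by simp
  have gs: "\<And>Lam \<theta>'. finite Lam \<Longrightarrow> Lam \<subseteq> dlat \<Longrightarrow> (\<forall>i\<in>dlat - Lam. \<theta>' i = \<theta> i) \<Longrightarrow> H_loc J Lam \<theta> \<le> H_loc J Lam \<theta>'"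
    using assms unfolding ground_state_def by blast
  have "H_loc J Lam \<theta> \<le> H_loc J Lam (\<lambda>p. pi - \<theta>' p)"
    by (rule gs[OF fin sub]) (use \<open>\<forall>i\<in>dlat - Lam. pi - \<theta>' i = \<theta> i\<close> in simp)
  moreover have "H_loc J Lam (\<lambda>p. pi - \<theta>' p) = H_loc J Lam \<theta>'" by (rule H_refl)
  moreover have "H_loc J Lam (\<lambda>p. pi - \<theta> p) = H_loc J Lam \<theta>" by (rule H_refl)
  ultimately show "H_loc J Lam (\<lambda>p. pi - \<theta> p) \<le> H_loc J Lam \<theta>'" by linarith
qed

theorem lemma1:
  fixes J :: real
  assumes "J > 0"
  shows "\<exists>\<theta>ME \<theta>MW. ground_state J \<theta>ME \<and> ground_state J \<theta>MW
            \<and> (\<exists>i\<in>dlat. (cos (\<theta>ME i), sin (\<theta>ME i)) \<noteq> (cos (\<theta>MW i), sin (\<theta>MW i)))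
            \<and> (\<forall>i\<in>dlat. cos (\<theta>ME i) = - cos (\<theta>MW i) \<and> cos (\<theta>ME i) \<noteq> 0)"
proof -
  define R where "R = sqrt (J^2 + 4)"
  have R0: "R > 0" unfolding R_def by (simp add: add_nonneg_pos)
  have R2: "R^2 = J^2 + 4" unfolding R_def by simp
  have "(J / R)^2 + (2 / R)^2 = (J^2 + 4) / R^2" by (simp add: power_divide add_divide_distrib)
  also have "\<dots> = 1"
  proof -
    have "0 \<le> J^2" by simp
    then have "J^2 + 4 \<noteq> 0" by linarith
    then show ?thesis using R2 by simp
  qed
  finally have "(J / R)^2 + (2 / R)^2 = 1" .
  then obtain \<beta> where cb: "J / R = cos \<beta>" and sb: "2 / R = sin \<beta>" by (rule sincos_total_2pi)
  have cb': "cos \<beta> = J / sqrt (J^2 + 4)" and sb': "sin \<beta> = 2 / sqrt (J^2 + 4)" using cb sb unfolding R_def by simp_all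
  let ?ME = "\<lambda>p. \<beta> * tau p"
  let ?MW = "\<lambda>p. pi - \<beta> * tau p"
  have g1: "ground_state J ?ME" by (rule gs_main[OF assms cb' sb'])
  have g2: "ground_state J ?MW" using gs_refl[OF g1] .
  have cpos: "cos \<beta> > 0" using cb[symmetric] assms R0 by simp
  have cnz: "cos (\<beta> * tau i) \<noteq> 0" for i
  proof -
    have "tau i = 1 \<or> tau i = -1 \<or> tau i = 0" unfolding tau_def using sg_cases[of i] by auto
    then show ?thesis using cpos by auto
  qed
  have d: "(1::int, 0::int) \<in> dlat" unfolding dlat_def by simp
  have ex: "\<exists>i\<in>dlat. (cos (?ME i), sin (?ME i)) \<noteq> (cos (?MW i), sin (?MW i))"
  proof (rule bexI[OF _ d])
    show "(cos (?ME (1,0)), sin (?ME (1,0))) \<noteq> (cos (?MW (1,0)), sin (?MW (1,0)))"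
      using cnz[of "(1,0)"] by simp
  qed
  have al: "\<forall>i\<in>dlat. cos (?ME i) = - cos (?MW i) \<and> cos (?ME i) \<noteq> 0"
    using cnz by simp
  show ?thesis
    apply (rule exI[of _ ?ME])
    apply (rule exI[of _ ?MW])
    using g1 g2 ex al by (intro conjI)
qed


end
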